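(* Let $k\ge 0$ and let $G=L_k$, of order $n=4k+6$. Then (a) $\gamma_t(G)=(n+2)/2$. Moreover, if $k\ge1$ and $w\in\{v_1,v_2,v_3\}$ (the three subdivision vertices on the path $a_1v_1v_2v_3c_1$), then (b) $\gamma_t(G-w)=n/2$ and (c) $\gamma_t^a(G;w)=n/2$.
   Context: For a graph $G$ with no isolated vertex, a total dominating set (TD-set) is a set $S\subseteq V(G)$ such that every vertex of $G$ is adjacent to some vertex of $S$; $\gamma_t(G)$ is the minimum cardinality of a TD-set. For a vertex $v$ of $G$, an almost total dominating set (ATD-set) of $G$ with respect to $v$ is a set $S\subseteq V(G)$ with $v\in S$ such that every vertex different from $v$ is adjacent to a vertex of $S$ and $v$ has no neighbor in $S$; $\gamma_t^a(G;v)$ is its minimum cardinality. For $k\ge 1$, $G_k$ is the graph with vertex set $\{a_i,b_i,c_i,d_i:1\le i\le k\}$ whose edges are: the edges of the path $a_1b_1a_2b_2\cdots a_kb_k$, the edges of the path $c_1d_1c_2d_2\cdots c_kd_k$, the edges $a_id_i$ and $b_ic_i$ for every $1\le i\le k$, and the two edges $a_1c_1$ and $b_kd_k$. $F_k$ ($k\ge1$) is obtained from $G_k$ by replacing the edge $a_1c_1$ by a path $a_1v_1v_2v_3c_1$ through three new vertices $v_1,v_2,v_3$. $L_0=C_6$, and for $k\ge1$, $L_k$ is obtained from $F_k$ by replacing the edge $b_kd_k$ by a path $b_ku_1u_2u_3d_k$ through three new vertices $u_1,u_2,u_3$. *)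

theory Defs
  imports Main
begin

text \<open>A graph is given by a vertex set VS and a (symmetric, irreflexive) adjacency
  relation E. Vertex deletion G - w is (VS - {w}, E).\<close>

definition is_tdset :: "'a set \<Rightarrow> ('a \<Rightarrow> 'a \<Rightarrow> bool) \<Rightarrow> 'a set \<Rightarrow> bool" where
  "is_tdset VS E S \<longleftrightarrow> S \<subseteq> VS \<and> (\<forall>x\<in>VS. \<exists>u\<in>S. E x u)"

definition gamma_t :: "'a set \<Rightarrow> ('a \<Rightarrow> 'a \<Rightarrow> bool) \<Rightarrow> nat" where
  "gamma_t VS E = Min {card S | S. is_tdset VS E S}"

definition is_atdset :: "'a set \<Rightarrow> ('a \<Rightarrow> 'a \<Rightarrow> bool) \<Rightarrow> 'a \<Rightarrow> 'a set \<Rightarrow> bool" where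
  "is_atdset VS E v S \<longleftrightarrow> S \<subseteq> VS \<and> v \<in> S \<and> (\<forall>x\<in>VS - {v}. \<exists>u\<in>S. E x u)
      \<and> (\<forall>u\<in>S. \<not> E v u)"

definition gamma_ta :: "'a set \<Rightarrow> ('a \<Rightarrow> 'a \<Rightarrow> bool) \<Rightarrow> 'a \<Rightarrow> nat" where
  "gamma_ta VS E v = Min {card S | S. is_atdset VS E v S}"

text \<open>Vertices of L_k: A i = a_i, B i = b_i, C i = c_i, D i = d_i (1 <= i <= k),
  V 1..3 = v_1..v_3, U 1..3 = u_1..u_3. For k = 0, L_0 = C_6 on the six vertices
  V 1, V 2, V 3, U 1, U 2, U 3.\<close>

datatype vtx = A nat | B nat | C nat | D nat | V nat | U nat

definition L_verts :: "nat \<Rightarrow> vtx set" where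
  "L_verts k = {A i | i. 1 \<le> i \<and> i \<le> k} \<union> {B i | i. 1 \<le> i \<and> i \<le> k}
     \<union> {C i | i. 1 \<le> i \<and> i \<le> k} \<union> {D i | i. 1 \<le> i \<and> i \<le> k}
     \<union> {V 1, V 2, V 3, U 1, U 2, U 3}"

definition L_edge0 :: "nat \<Rightarrow> vtx \<Rightarrow> vtx \<Rightarrow> bool" where
  "L_edge0 k x y =
    (if k = 0 then
       (x, y) \<in> {(V 1, V 2), (V 2, V 3), (V 3, U 1), (U 1, U 2), (U 2, U 3), (U 3, V 1)}
     else
       (\<exists>i. 1 \<le> i \<and> i \<le> k \<and>
          ((x = A i \<and> y = B i) \<or> (x = C i \<and> y = D i) \<or>
           (x = A i \<and> y = D i) \<or> (x = B i \<and> y = C i)))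
     \<or> (\<exists>i. 1 \<le> i \<and> i < k \<and> ((x = B i \<and> y = A (i+1)) \<or> (x = D i \<and> y = C (i+1))))
     \<or> (x = A 1 \<and> y = V 1) \<or> (x = V 1 \<and> y = V 2) \<or> (x = V 2 \<and> y = V 3) \<or> (x = V 3 \<and> y = C 1)
     \<or> (x = B k \<and> y = U 1) \<or> (x = U 1 \<and> y = U 2) \<or> (x = U 2 \<and> y = U 3) \<or> (x = U 3 \<and> y = D k))"

definition L_adj :: "nat \<Rightarrow> vtx \<Rightarrow> vtx \<Rightarrow> bool" where
  "L_adj k x y \<longleftrightarrow> L_edge0 k x y \<or> L_edge0 k y x"

end

theory Submission imports Defs begin

definition ind :: "vtx set \<Rightarrow> vtx \<Rightarrow> nat" where "ind S x = (if x \<in> S then 1 else 0)"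
definition dm :: "nat \<Rightarrow> vtx set \<Rightarrow> vtx \<Rightarrow> bool" where "dm k S x \<longleftrightarrow> (\<exists>u\<in>S. L_adj k x u)"

lemma nA: "1 \<le> k \<Longrightarrow> 1 \<le> i \<Longrightarrow> i \<le> k \<Longrightarrow> L_adj k (A i) y \<longleftrightarrow> (y = B i \<or> y = D i \<or> (i = 1 \<and> y = V 1) \<or> (i > 1 \<and> y = B (i - 1)))"
  by (auto simp: L_adj_def L_edge0_def)
lemma nB: "1 \<le> k \<Longrightarrow> 1 \<le> i \<Longrightarrow> i \<le> k \<Longrightarrow> L_adj k (B i) y \<longleftrightarrow> (y = A i \<or> y = C i \<or> (i = k \<and> y = U 1) \<or> (i < k \<and> y = A (Suc i)))"
  by (auto simp: L_adj_def L_edge0_def)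
lemma nC: "1 \<le> k \<Longrightarrow> 1 \<le> i \<Longrightarrow> i \<le> k \<Longrightarrow> L_adj k (C i) y \<longleftrightarrow> (y = D i \<or> y = B i \<or> (i = 1 \<and> y = V 3) \<or> (i > 1 \<and> y = D (i - 1)))"
  by (auto simp: L_adj_def L_edge0_def)
lemma nD: "1 \<le> k \<Longrightarrow> 1 \<le> i \<Longrightarrow> i \<le> k \<Longrightarrow> L_adj k (D i) y \<longleftrightarrow> (y = C i \<or> y = A i \<or> (i = k \<and> y = U 3) \<or> (i < k \<and> y = C (Suc i)))"
  by (auto simp: L_adj_def L_edge0_def)
lemma nV1: "1 \<le> k \<Longrightarrow> L_adj k (V 1) y \<longleftrightarrow> (y = A 1 \<or> y = V 2)"
  by (auto simp: L_adj_def L_edge0_def)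
lemma nV2: "1 \<le> k \<Longrightarrow> L_adj k (V 2) y \<longleftrightarrow> (y = V 1 \<or> y = V 3)"
  by (auto simp: L_adj_def L_edge0_def)
lemma nV3: "1 \<le> k \<Longrightarrow> L_adj k (V 3) y \<longleftrightarrow> (y = V 2 \<or> y = C 1)"
  by (auto simp: L_adj_def L_edge0_def)
lemma nU1: "1 \<le> k \<Longrightarrow> L_adj k (U 1) y \<longleftrightarrow> (y = B k \<or> y = U 2)"
  by (auto simp: L_adj_def L_edge0_def)
lemma nU2: "1 \<le> k \<Longrightarrow> L_adj k (U 2) y \<longleftrightarrow> (y = U 1 \<or> y = U 3)"
  by (auto simp: L_adj_def L_edge0_def)
lemma nU3: "1 \<le> k \<Longrightarrow> L_adj k (U 3) y \<longleftrightarrow> (y = U 2 \<or> y = D k)"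
  by (auto simp: L_adj_def L_edge0_def)

lemmas nbr = nA nB nC nD nV1 nV2 nV3 nU1 nU2 nU3

lemma L_verts_eq: "L_verts k = A ` {1..k} \<union> B ` {1..k} \<union> C ` {1..k} \<union> D ` {1..k} \<union> {V 1, V 2, V 3, U 1, U 2, U 3}"
  by (auto simp: L_verts_def)

lemma fin_L: "finite (L_verts k)"
  by (simp add: L_verts_eq)

lemma seq_bound: "(\<forall>i<N. f i = 0 \<longrightarrow> 2 \<le> f (Suc i)) \<Longrightarrow> N + (if f N = 0 then 0 else 1) \<le> (\<Sum>i\<le>N. f i)"
proof (induction N)
  case 0 show ?case by simp
next
  case (Suc N)
  then have IH: "N + (if f N = 0 then 0 else 1) \<le> (\<Sum>i\<le>N. f i)" by auto
  moreover have "f N = 0 \<longrightarrow> 2 \<le> f (Suc N)" using Suc.prems by auto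
  ultimately show ?case by (auto split: if_splits)
qed

definition Q :: "nat \<Rightarrow> vtx set" where
  "Q k = {x. \<exists>i. 1 \<le> i \<and> i \<le> k \<and> (x = A i \<or> x = B i \<or> x = C i \<or> x = D i)}"

lemma Q_Suc: "Q (Suc k) = Q k \<union> {A (Suc k), B (Suc k), C (Suc k), D (Suc k)}"
  by (auto simp: Q_def le_Suc_eq)

lemma Q_fin: "finite (Q k)"
proof (induction k)
  case 0 then show ?case by (simp add: Q_def)
next
  case (Suc k) then show ?case by (simp add: Q_Suc)
qed

lemma Q_sum: "(\<Sum>x\<in>Q k. ind S x) = (\<Sum>i=1..k. ind S (A i) + ind S (B i) + ind S (C i) + ind S (D i))"
proof (induction k)
  case 0 then show ?case by (simp add: Q_def)
next
  case (Suc k)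
  have d: "Q k \<inter> {A (Suc k), B (Suc k), C (Suc k), D (Suc k)} = {}" by (auto simp: Q_def)
  have "(\<Sum>x\<in>Q (Suc k). ind S x) = (\<Sum>x\<in>Q k. ind S x) + (\<Sum>x\<in>{A (Suc k), B (Suc k), C (Suc k), D (Suc k)}. ind S x)"
    unfolding Q_Suc by (rule sum.union_disjoint) (auto simp: Q_fin d)
  also have "(\<Sum>x\<in>{A (Suc k), B (Suc k), C (Suc k), D (Suc k)}. ind S x) = ind S (A (Suc k)) + ind S (B (Suc k)) + ind S (C (Suc k)) + ind S (D (Suc k))"
    by simp
  finally show ?case using Suc by simp
qed

lemma card_dec: assumes "S \<subseteq> L_verts k"
  shows "card S = (\<Sum>i=1..k. ind S (A i) + ind S (C i)) + (\<Sum>i=1..k. ind S (B i) + ind S (D i))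
     + ind S (V 1) + ind S (V 2) + ind S (V 3) + ind S (U 1) + ind S (U 2) + ind S (U 3)"
proof -
  have "card S = (\<Sum>x\<in>L_verts k. ind S x)"
    using sum.inter_restrict[OF fin_L[of k], where g="\<lambda>_. 1::nat" and B=S] assms
    by (simp add: ind_def Int_absorb1 inf.absorb2)
  also have "L_verts k = Q k \<union> {V 1, V 2, V 3, U 1, U 2, U 3}"
    by (auto simp: L_verts_def Q_def)
  also have "(\<Sum>x\<in>Q k \<union> {V 1, V 2, V 3, U 1, U 2, U 3}. ind S x) = (\<Sum>x\<in>Q k. ind S x) + (\<Sum>x\<in>{V 1, V 2, V 3, U 1, U 2, U 3}. ind S x)"
    by (rule sum.union_disjoint) (use Q_fin[of k] in \<open>auto simp: Q_def\<close>)
  finally show ?thesis by (simp add: Q_sum sum.distrib)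
qed


lemma dmA: "1 \<le> k \<Longrightarrow> 1 \<le> i \<Longrightarrow> i \<le> k \<Longrightarrow> dm k S (A i) \<longleftrightarrow> (B i \<in> S \<or> D i \<in> S \<or> (i = 1 \<and> V 1 \<in> S) \<or> (i > 1 \<and> B (i - 1) \<in> S))"
  by (auto simp: dm_def nA)
lemma dmB: "1 \<le> k \<Longrightarrow> 1 \<le> i \<Longrightarrow> i \<le> k \<Longrightarrow> dm k S (B i) \<longleftrightarrow> (A i \<in> S \<or> C i \<in> S \<or> (i = k \<and> U 1 \<in> S) \<or> (i < k \<and> A (Suc i) \<in> S))"
  by (auto simp: dm_def nB)
lemma dmC: "1 \<le> k \<Longrightarrow> 1 \<le> i \<Longrightarrow> i \<le> k \<Longrightarrow> dm k S (C i) \<longleftrightarrow> (D i \<in> S \<or> B i \<in> S \<or> (i = 1 \<and> V 3 \<in> S) \<or> (i > 1 \<and> D (i - 1) \<in> S))"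
  by (auto simp: dm_def nC)
lemma dmD: "1 \<le> k \<Longrightarrow> 1 \<le> i \<Longrightarrow> i \<le> k \<Longrightarrow> dm k S (D i) \<longleftrightarrow> (C i \<in> S \<or> A i \<in> S \<or> (i = k \<and> U 3 \<in> S) \<or> (i < k \<and> C (Suc i) \<in> S))"
  by (auto simp: dm_def nD)
lemma dmV1: assumes "1 \<le> k" shows "dm k S (V 1) \<longleftrightarrow> (A 1 \<in> S \<or> V 2 \<in> S)" using nV1[OF assms] by (auto simp: dm_def)
lemma dmV2: assumes "1 \<le> k" shows "dm k S (V 2) \<longleftrightarrow> (V 1 \<in> S \<or> V 3 \<in> S)" using nV2[OF assms] by (auto simp: dm_def)
lemma dmV3: assumes "1 \<le> k" shows "dm k S (V 3) \<longleftrightarrow> (V 2 \<in> S \<or> C 1 \<in> S)" using nV3[OF assms] by (auto simp: dm_def)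
lemma dmU1: assumes "1 \<le> k" shows "dm k S (U 1) \<longleftrightarrow> (B k \<in> S \<or> U 2 \<in> S)" using nU1[OF assms] by (auto simp: dm_def)
lemma dmU2: assumes "1 \<le> k" shows "dm k S (U 2) \<longleftrightarrow> (U 1 \<in> S \<or> U 3 \<in> S)" using nU2[OF assms] by (auto simp: dm_def)
lemma dmU3: assumes "1 \<le> k" shows "dm k S (U 3) \<longleftrightarrow> (U 2 \<in> S \<or> D k \<in> S)" using nU3[OF assms] by (auto simp: dm_def)

definition fX :: "vtx set \<Rightarrow> nat \<Rightarrow> nat \<Rightarrow> nat" where
  "fX S k t = (if t = 0 then ind S (V 2) else if t \<le> k then ind S (A t) + ind S (C t) else ind S (U 1) + ind S (U 3))"
definition gY :: "vtx set \<Rightarrow> nat \<Rightarrow> nat \<Rightarrow> nat" where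
  "gY S k t = (if t = 0 then ind S (U 2) else if t \<le> k then ind S (B (Suc k - t)) + ind S (D (Suc k - t)) else ind S (V 1) + ind S (V 3))"

lemma sumX: "(\<Sum>t\<le>Suc k. fX S k t) = ind S (V 2) + (\<Sum>i=1..k. ind S (A i) + ind S (C i)) + (ind S (U 1) + ind S (U 3))"
proof -
  have "(\<Sum>t\<le>Suc k. fX S k t) = (\<Sum>t<Suc k. fX S k t) + fX S k (Suc k)"
    by (simp add: lessThan_Suc_atMost)
  also have "(\<Sum>t<Suc k. fX S k t) = fX S k 0 + (\<Sum>t<k. fX S k (Suc t))" by (rule sum.lessThan_Suc_shift)
  also have "(\<Sum>t<k. fX S k (Suc t)) = (\<Sum>t<k. ind S (A (Suc t)) + ind S (C (Suc t)))"
    by (rule sum.cong) (auto simp: fX_def)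
  also have "\<dots> = (\<Sum>i=1..k. ind S (A i) + ind S (C i))"
    using sum.atLeast1_atMost_eq[of "\<lambda>i. ind S (A i) + ind S (C i)" k] by simp
  finally show ?thesis by (simp add: fX_def)
qed

lemma sumY: "(\<Sum>t\<le>Suc k. gY S k t) = ind S (U 2) + (\<Sum>i=1..k. ind S (B i) + ind S (D i)) + (ind S (V 1) + ind S (V 3))"
proof -
  have "(\<Sum>t\<le>Suc k. gY S k t) = (\<Sum>t<Suc k. gY S k t) + gY S k (Suc k)"
    by (simp add: lessThan_Suc_atMost)
  also have "(\<Sum>t<Suc k. gY S k t) = gY S k 0 + (\<Sum>t<k. gY S k (Suc t))" by (rule sum.lessThan_Suc_shift)
  also have "(\<Sum>t<k. gY S k (Suc t)) = (\<Sum>t<k. (\<lambda>j. ind S (B (Suc j)) + ind S (D (Suc j))) (k - Suc t))"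
    by (rule sum.cong) (auto simp: gY_def Suc_diff_Suc)
  also have "\<dots> = (\<Sum>t<k. ind S (B (Suc t)) + ind S (D (Suc t)))"
    by (rule sum.nat_diff_reindex)
  also have "\<dots> = (\<Sum>i=1..k. ind S (B i) + ind S (D i))"
    using sum.atLeast1_atMost_eq[of "\<lambda>i. ind S (B i) + ind S (D i)" k] by simp
  finally show ?thesis by (simp add: gY_def)
qed

lemma lower:
  assumes k: "1 \<le> k" and S: "S \<subseteq> L_verts k"
    and dall: "\<And>i. 1 \<le> i \<Longrightarrow> i \<le> k \<Longrightarrow> dm k S (A i) \<and> dm k S (B i) \<and> dm k S (C i) \<and> dm k S (D i)"
    and u1: "dm k S (U 1)" and u2: "dm k S (U 2)" and u3: "dm k S (U 3)"
  shows "2*k + 2 + (if dm k S (V 1) \<and> dm k S (V 3) then 1 else 0) + (if dm k S (V 2) then 1 else 0) \<le> card S"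
proof -
  have cs: "card S = (\<Sum>t\<le>Suc k. fX S k t) + (\<Sum>t\<le>Suc k. gY S k t)"
    unfolding sumX sumY using card_dec[OF S] by simp
  have stepX: "2 \<le> fX S k (Suc i)" if "1 \<le> i" "i \<le> k" "fX S k i = 0" for i
  proof -
    have n: "A i \<notin> S" "C i \<notin> S" using that by (auto simp: fX_def ind_def split: if_splits)
    have "(i = k \<and> U 1 \<in> S) \<or> (i < k \<and> A (Suc i) \<in> S)" using dall[OF that(1,2)] n dmB[OF k that(1,2)] by auto
    moreover have "(i = k \<and> U 3 \<in> S) \<or> (i < k \<and> C (Suc i) \<in> S)" using dall[OF that(1,2)] n dmD[OF k that(1,2)] by auto
    ultimately show ?thesis by (auto simp: fX_def ind_def)
  qed
  have endX: "fX S k (Suc k) \<noteq> 0" using u2 dmU2[OF k] by (auto simp: fX_def ind_def)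
  have X: "k + 1 + (if dm k S (V 1) \<and> dm k S (V 3) then 1 else 0) \<le> (\<Sum>t\<le>Suc k. fX S k t)"
  proof (cases "dm k S (V 1) \<and> dm k S (V 3)")
    case True
    have "\<forall>i<Suc k. fX S k i = 0 \<longrightarrow> 2 \<le> fX S k (Suc i)"
    proof (intro allI impI)
      fix i assume i: "i < Suc k" "fX S k i = 0"
      show "2 \<le> fX S k (Suc i)"
      proof (cases "i = 0")
        case True
        then have "V 2 \<notin> S" using i by (auto simp: fX_def ind_def split: if_splits)
        then have "A 1 \<in> S" "C 1 \<in> S" using \<open>dm k S (V 1) \<and> dm k S (V 3)\<close> dmV1[OF k] dmV3[OF k] by auto
        then show ?thesis using True k by (auto simp: fX_def ind_def)
      next
        case False then show ?thesis using stepX i by auto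
      qed
    qed
    from seq_bound[OF this] endX True show ?thesis by simp
  next
    case False
    have "\<forall>i<k. fX S k (Suc i) = 0 \<longrightarrow> 2 \<le> fX S k (Suc (Suc i))" using stepX by auto
    from seq_bound[OF this] endX have "k + 1 \<le> (\<Sum>t\<le>k. fX S k (Suc t))" by simp
    also have "\<dots> \<le> (\<Sum>t\<le>Suc k. fX S k t)" by (simp add: sum.atMost_Suc_shift del: sum.atMost_Suc)
    finally have "k + 1 \<le> (\<Sum>t\<le>Suc k. fX S k t)" .
    then show ?thesis by (simp only: if_not_P[OF False] add_0_right)
  qed
  have stepY: "2 \<le> gY S k (Suc t)" if "t < Suc k" "gY S k t = 0" for t
  proof (cases "t = 0")
    case True
    then have "U 2 \<notin> S" using that by (auto simp: gY_def ind_def split: if_splits)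
    then have "B k \<in> S" "D k \<in> S" using u1 u3 dmU1[OF k] dmU3[OF k] by auto
    then show ?thesis using True k by (auto simp: gY_def ind_def)
  next
    case False
    define j where "j = Suc k - t"
    have j: "1 \<le> j" "j \<le> k" using False that by (auto simp: j_def)
    have n: "B j \<notin> S" "D j \<notin> S" using that False by (auto simp: gY_def ind_def j_def split: if_splits)
    have a: "(j = 1 \<and> V 1 \<in> S) \<or> (j > 1 \<and> B (j - 1) \<in> S)" using dall[OF j] n dmA[OF k j] by auto
    have c: "(j = 1 \<and> V 3 \<in> S) \<or> (j > 1 \<and> D (j - 1) \<in> S)" using dall[OF j] n dmC[OF k j] by auto
    show ?thesis
    proof (cases "t = k")
      case True
      then have "j = 1" by (simp add: j_def)
      then show ?thesis using a c True by (auto simp: gY_def ind_def)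
    next
      case False
      then have "Suc t \<le> k" "Suc k - Suc t = j - 1" "j > 1" using that \<open>t \<noteq> 0\<close> by (auto simp: j_def)
      then show ?thesis using a c by (auto simp: gY_def ind_def)
    qed
  qed
  have Y: "k + 1 + (if dm k S (V 2) then 1 else 0) \<le> (\<Sum>t\<le>Suc k. gY S k t)"
  proof -
    have e: "dm k S (V 2) \<longrightarrow> gY S k (Suc k) \<noteq> 0" using dmV2[OF k] by (auto simp: gY_def ind_def)
    have "\<forall>i<Suc k. gY S k i = 0 \<longrightarrow> 2 \<le> gY S k (Suc i)" using stepY by auto
    from seq_bound[OF this] e show ?thesis by (auto split: if_splits)
  qed
  show ?thesis using X Y cs by simp
qed


lemma Min_eq:
  assumes "finite VS" "\<And>S. P S \<Longrightarrow> S \<subseteq> VS" "P S0" "card S0 = m" "\<And>S. P S \<Longrightarrow> m \<le> card S"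
  shows "Min {card S | S. P S} = m"
proof (rule Min_eqI)
  show "finite {card S |S. P S}"
  proof (rule finite_subset[of _ "{..card VS}"])
    have "\<And>S. P S \<Longrightarrow> card S \<le> card VS" by (rule card_mono[OF assms(1) assms(2)])
    then show "{card S |S. P S} \<subseteq> {..card VS}" by auto
  qed simp
  show "\<And>y. y \<in> {card S |S. P S} \<Longrightarrow> m \<le> y" using assms by auto
  show "m \<in> {card S |S. P S}" using assms by auto
qed

lemma lower_full:
  assumes k: "1 \<le> k" and S: "S \<subseteq> L_verts k" and d: "\<forall>x\<in>L_verts k. dm k S x"
  shows "2*k + 4 \<le> card S"
proof -
  have "\<And>x. x \<in> L_verts k \<Longrightarrow> dm k S x" using d by auto
  then have "2*k + 2 + (if dm k S (V 1) \<and> dm k S (V 3) then 1 else 0) + (if dm k S (V 2) then 1 else 0) \<le> card S"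
    by (intro lower[OF k S]) (auto simp: L_verts_def)
  moreover have "dm k S (V 1)" "dm k S (V 2)" "dm k S (V 3)" using d by (auto simp: L_verts_def)
  ultimately show ?thesis by simp
qed

lemma lower_w:
  assumes k: "1 \<le> k" and S: "S \<subseteq> L_verts k" and w: "w \<in> {V 1, V 2, V 3}" and d: "\<forall>x\<in>L_verts k - {w}. dm k S x"
  shows "2*k + 3 \<le> card S"
proof -
  have "\<And>x. x \<in> L_verts k \<Longrightarrow> x \<noteq> w \<Longrightarrow> dm k S x" using d by auto
  then have "2*k + 2 + (if dm k S (V 1) \<and> dm k S (V 3) then 1 else 0) + (if dm k S (V 2) then 1 else 0) \<le> card S"
    using w by (intro lower[OF k S]) (auto simp: L_verts_def)
  moreover have "(dm k S (V 1) \<and> dm k S (V 3)) \<or> dm k S (V 2)" using d w by (auto simp: L_verts_def)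
  ultimately show ?thesis by (auto split: if_splits)
qed

lemma cardT: assumes "inj F" "inj G" "F ` {1..k} \<inter> G ` {1..k} = {}"
  "x \<notin> F ` {1..k} \<union> G ` {1..k}" "y \<notin> F ` {1..k} \<union> G ` {1..k}" "z \<notin> F ` {1..k} \<union> G ` {1..k}"
  "x \<noteq> y" "x \<noteq> z" "y \<noteq> z"
  shows "card ({x, y, z} \<union> F ` {1..k} \<union> G ` {1..k}) = 2*k + 3"
proof -
  have "card ({x, y, z} \<union> F ` {1..k} \<union> G ` {1..k}) = card ({x, y, z} \<union> F ` {1..k}) + card (G ` {1..k})"
    by (rule card_Un_disjoint) (use assms in auto)
  also have "card ({x, y, z} \<union> F ` {1..k}) = card {x,y,z} + card (F ` {1..k})"
    by (rule card_Un_disjoint) (use assms in auto)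
  finally show ?thesis using assms by (simp add: card_image inj_on_def inj_def)
qed

lemma nV1': "1 \<le> k \<Longrightarrow> L_adj k (V (Suc 0)) y \<longleftrightarrow> (y = A 1 \<or> y = V 2)" using nV1 by simp
lemma nU1': "1 \<le> k \<Longrightarrow> L_adj k (U (Suc 0)) y \<longleftrightarrow> (y = B k \<or> y = U 2)" using nU1 by simp
lemmas nbr' = nbr nV1' nU1'

lemma injs: "inj A" "inj B" "inj C" "inj D" by (auto simp: inj_def)

lemma T_full: assumes k: "1 \<le> k"
  shows "is_tdset (L_verts k) (L_adj k) (insert (V 1) ({V 2, U 1, U 2} \<union> A ` {1..k} \<union> B ` {1..k}))"
  unfolding is_tdset_def
proof (intro conjI ballI)
  show "insert (V 1) ({V 2, U 1, U 2} \<union> A ` {1..k} \<union> B ` {1..k}) \<subseteq> L_verts k" by (auto simp: L_verts_def)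
  fix x assume "x \<in> L_verts k"
  then show "\<exists>u\<in>insert (V 1) ({V 2, U 1, U 2} \<union> A ` {1..k} \<union> B ` {1..k}). L_adj k x u"
    using k by (auto simp: L_verts_eq nbr')
qed


lemma T_V2: assumes k: "1 \<le> k"
  shows "is_tdset (L_verts k - {V 2}) (L_adj k) ({C 1, U 1, U 2} \<union> A ` {1..k} \<union> B ` {1..k})"
  unfolding is_tdset_def
proof (intro conjI ballI)
  show "{C 1, U 1, U 2} \<union> A ` {1..k} \<union> B ` {1..k} \<subseteq> L_verts k - {V 2}" using k by (auto simp: L_verts_def)
  fix x assume "x \<in> L_verts k - {V 2}"
  then show "\<exists>u\<in>{C 1, U 1, U 2} \<union> A ` {1..k} \<union> B ` {1..k}. L_adj k x u"
    using k by (auto simp: L_verts_eq nbr')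
qed

lemma T_V1: assumes k: "1 \<le> k"
  shows "is_tdset (L_verts k - {V 1}) (L_adj k) ({U 1, V 3, U 2} \<union> C ` {1..k} \<union> B ` {1..k})"
  unfolding is_tdset_def
proof (intro conjI ballI)
  show "{U 1, V 3, U 2} \<union> C ` {1..k} \<union> B ` {1..k} \<subseteq> L_verts k - {V 1}" using k by (auto simp: L_verts_def)
  fix x assume "x \<in> L_verts k - {V 1}"
  then show "\<exists>u\<in>{U 1, V 3, U 2} \<union> C ` {1..k} \<union> B ` {1..k}. L_adj k x u"
    using k by (auto simp: L_verts_eq nbr')
qed

lemma T_V3: assumes k: "1 \<le> k"
  shows "is_tdset (L_verts k - {V 3}) (L_adj k) ({V 1, U 2, U 1} \<union> A ` {1..k} \<union> D ` {1..k})"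
  unfolding is_tdset_def
proof (intro conjI ballI)
  show "{V 1, U 2, U 1} \<union> A ` {1..k} \<union> D ` {1..k} \<subseteq> L_verts k - {V 3}" using k by (auto simp: L_verts_def)
  fix x assume "x \<in> L_verts k - {V 3}"
  then show "\<exists>u\<in>{V 1, U 2, U 1} \<union> A ` {1..k} \<union> D ` {1..k}. L_adj k x u"
    using k by (auto simp: L_verts_eq nbr')
qed

lemma A_V2: assumes k: "1 \<le> k"
  shows "is_atdset (L_verts k) (L_adj k) (V 2) ({V 2, U 1, U 2} \<union> A ` {1..k} \<union> B ` {1..k})"
  unfolding is_atdset_def
proof (intro conjI ballI)
  show "{V 2, U 1, U 2} \<union> A ` {1..k} \<union> B ` {1..k} \<subseteq> L_verts k" using k by (auto simp: L_verts_def)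
  show "V 2 \<in> {V 2, U 1, U 2} \<union> A ` {1..k} \<union> B ` {1..k}" by simp
  fix x assume "x \<in> L_verts k - {V 2}"
  then show "\<exists>u\<in>{V 2, U 1, U 2} \<union> A ` {1..k} \<union> B ` {1..k}. L_adj k x u"
    using k by (auto simp: L_verts_eq nbr')
next
  fix u assume "u \<in> {V 2, U 1, U 2} \<union> A ` {1..k} \<union> B ` {1..k}"
  then show "\<not> L_adj k (V 2) u" using k by (auto simp: nbr')
qed

lemma A_V1: assumes k: "1 \<le> k"
  shows "is_atdset (L_verts k) (L_adj k) (V 1) ({V 1, U 1, U 2} \<union> C ` {1..k} \<union> B ` {1..k})"
  unfolding is_atdset_def
proof (intro conjI ballI)
  show "{V 1, U 1, U 2} \<union> C ` {1..k} \<union> B ` {1..k} \<subseteq> L_verts k" using k by (auto simp: L_verts_def)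
  show "V 1 \<in> {V 1, U 1, U 2} \<union> C ` {1..k} \<union> B ` {1..k}" by simp
  fix x assume "x \<in> L_verts k - {V 1}"
  then show "\<exists>u\<in>{V 1, U 1, U 2} \<union> C ` {1..k} \<union> B ` {1..k}. L_adj k x u"
    using k by (auto simp: L_verts_eq nbr')
next
  fix u assume "u \<in> {V 1, U 1, U 2} \<union> C ` {1..k} \<union> B ` {1..k}"
  then show "\<not> L_adj k (V 1) u" using k by (auto simp: nbr')
qed

lemma A_V3: assumes k: "1 \<le> k"
  shows "is_atdset (L_verts k) (L_adj k) (V 3) ({V 3, U 1, U 2} \<union> A ` {1..k} \<union> D ` {1..k})"
  unfolding is_atdset_def
proof (intro conjI ballI)
  show "{V 3, U 1, U 2} \<union> A ` {1..k} \<union> D ` {1..k} \<subseteq> L_verts k" using k by (auto simp: L_verts_def)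
  show "V 3 \<in> {V 3, U 1, U 2} \<union> A ` {1..k} \<union> D ` {1..k}" by simp
  fix x assume "x \<in> L_verts k - {V 3}"
  then show "\<exists>u\<in>{V 3, U 1, U 2} \<union> A ` {1..k} \<union> D ` {1..k}. L_adj k x u"
    using k by (auto simp: L_verts_eq nbr')
next
  fix u assume "u \<in> {V 3, U 1, U 2} \<union> A ` {1..k} \<union> D ` {1..k}"
  then show "\<not> L_adj k (V 3) u" using k by (auto simp: nbr')
qed

lemma L0: "L_verts 0 = {V 1, V 2, V 3, U 1, U 2, U 3}" by (auto simp: L_verts_def)

lemma T0: "is_tdset (L_verts 0) (L_adj 0) {V 1, V 2, U 1, U 2}"
  by (auto simp: is_tdset_def L0 L_adj_def L_edge0_def)

lemma lower0: assumes "is_tdset (L_verts 0) (L_adj 0) S" shows "4 \<le> card S"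
proof -
  have S: "S \<subseteq> L_verts 0" using assms by (simp add: is_tdset_def)
  have d: "\<forall>x\<in>{V 1, V 2, V 3, U 1, U 2, U 3}. \<exists>u\<in>S. L_adj 0 x u" using assms by (simp add: is_tdset_def L0)
  have c: "card S = ind S (V 1) + ind S (V 2) + ind S (V 3) + ind S (U 1) + ind S (U 2) + ind S (U 3)"
    using card_dec[OF S] by simp
  have "V 2 \<in> S \<or> U 3 \<in> S" "V 1 \<in> S \<or> V 3 \<in> S" "V 2 \<in> S \<or> U 1 \<in> S"
       "V 3 \<in> S \<or> U 2 \<in> S" "U 1 \<in> S \<or> U 3 \<in> S" "U 2 \<in> S \<or> V 1 \<in> S"
    using d by (auto simp: L_adj_def L_edge0_def)
  then show ?thesis unfolding c ind_def by auto
qed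

lemma sum_const2: "(\<And>i. 1 \<le> i \<Longrightarrow> i \<le> k \<Longrightarrow> f i = (2::nat)) \<Longrightarrow> (\<Sum>i=1..k. f i) = 2 * k"
  by (simp add: sum.cong[of "{1..k}" "{1..k}" f "\<lambda>_. 2"])

theorem mainTheorem4:
  fixes k :: nat
  defines "n \<equiv> card (L_verts k)"
  shows "n = 4 * k + 6
    \<and> 2 * gamma_t (L_verts k) (L_adj k) = n + 2
    \<and> (k \<ge> 1 \<longrightarrow> (\<forall>w \<in> {V 1, V 2, V 3}.
          2 * gamma_t (L_verts k - {w}) (L_adj k) = n
        \<and> 2 * gamma_ta (L_verts k) (L_adj k) w = n))"
proof -
  have nn: "n = 4 * k + 6"
  proof -
    have "n = (\<Sum>i=1..k. ind (L_verts k) (A i) + ind (L_verts k) (C i)) + (\<Sum>i=1..k. ind (L_verts k) (B i) + ind (L_verts k) (D i)) + 6"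
      unfolding n_def using card_dec[of "L_verts k" k] by (simp add: ind_def L_verts_def)
    also have "(\<Sum>i=1..k. ind (L_verts k) (A i) + ind (L_verts k) (C i)) = 2 * k"
      by (rule sum_const2) (auto simp: ind_def L_verts_def)
    also have "(\<Sum>i=1..k. ind (L_verts k) (B i) + ind (L_verts k) (D i)) = 2 * k"
      by (rule sum_const2) (auto simp: ind_def L_verts_def)
    finally show ?thesis by simp
  qed
  show ?thesis
  proof (cases "k = 0")
    case True
    have "gamma_t (L_verts k) (L_adj k) = 4" unfolding gamma_t_def True
    proof (rule Min_eq[where P="is_tdset (L_verts 0) (L_adj 0)", OF fin_L _ T0])
      show "card {V 1, V 2, U 1, U 2} = 4" by simp
    qed (auto simp: is_tdset_def lower0)
    then show ?thesis using nn True by simp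
  next
    case False
    then have k: "1 \<le> k" by simp
    have g: "gamma_t (L_verts k) (L_adj k) = 2*k + 4" unfolding gamma_t_def
    proof (rule Min_eq[where P="is_tdset (L_verts k) (L_adj k)", OF fin_L, of _ "insert (V 1) ({V 2, U 1, U 2} \<union> A ` {1..k} \<union> B ` {1..k})"])
      show "is_tdset (L_verts k) (L_adj k) (insert (V 1) ({V 2, U 1, U 2} \<union> A ` {1..k} \<union> B ` {1..k}))"
        by (rule T_full[OF k])
      have "card ({V 2, U 1, U 2} \<union> A ` {1..k} \<union> B ` {1..k}) = 2*k+3"
        by (rule cardT) (auto simp: injs)
      then show "card (insert (V 1) ({V 2, U 1, U 2} \<union> A ` {1..k} \<union> B ` {1..k})) = 2*k+4"
        by (subst card_insert_disjoint) (auto intro: finite_subset)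
      fix S assume "is_tdset (L_verts k) (L_adj k) S"
      then show "S \<subseteq> L_verts k" "2*k+4 \<le> card S"
        by (auto simp: is_tdset_def dm_def intro!: lower_full[OF k])
    qed
    have gw: "gamma_t (L_verts k - {w}) (L_adj k) = 2*k + 3" if w: "w \<in> {V 1, V 2, V 3}" for w
    proof -
      obtain T where T: "is_tdset (L_verts k - {w}) (L_adj k) T" "card T = 2*k+3"
      proof -
        consider "w = V 1" | "w = V 2" | "w = V 3" using w by auto
        then show ?thesis
        proof cases
          case 1 show ?thesis by (rule that[OF T_V1[OF k, folded 1]]) (rule cardT, auto simp: injs)
        next
          case 2 show ?thesis by (rule that[OF T_V2[OF k, folded 2]]) (rule cardT, auto simp: injs)
        next
          case 3 show ?thesis by (rule that[OF T_V3[OF k, folded 3]]) (rule cardT, auto simp: injs)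
        qed
      qed
      show ?thesis unfolding gamma_t_def
      proof (rule Min_eq[where P="is_tdset (L_verts k - {w}) (L_adj k)" and VS="L_verts k - {w}", OF _ _ T])
        show "finite (L_verts k - {w})" using fin_L by simp
        fix S assume "is_tdset (L_verts k - {w}) (L_adj k) S"
        then have S: "S \<subseteq> L_verts k - {w}" and d: "\<forall>x\<in>L_verts k - {w}. dm k S x"
          by (auto simp: is_tdset_def dm_def)
        then show "S \<subseteq> L_verts k - {w}" by simp
        show "2*k+3 \<le> card S" using S d by (intro lower_w[OF k _ w]) auto
      qed
    qed
    have ga: "gamma_ta (L_verts k) (L_adj k) w = 2*k + 3" if w: "w \<in> {V 1, V 2, V 3}" for w
    proof -
      obtain T where T: "is_atdset (L_verts k) (L_adj k) w T" "card T = 2*k+3"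
      proof -
        consider "w = V 1" | "w = V 2" | "w = V 3" using w by auto
        then show ?thesis
        proof cases
          case 1 show ?thesis by (rule that[OF A_V1[OF k, folded 1]]) (rule cardT, insert 1, auto simp: injs)
        next
          case 2 show ?thesis by (rule that[OF A_V2[OF k, folded 2]]) (rule cardT, insert 2, auto simp: injs)
        next
          case 3 show ?thesis by (rule that[OF A_V3[OF k, folded 3]]) (rule cardT, insert 3, auto simp: injs)
        qed
      qed
      show ?thesis unfolding gamma_ta_def
      proof (rule Min_eq[where P="is_atdset (L_verts k) (L_adj k) w", OF fin_L _ T])
        fix S assume "is_atdset (L_verts k) (L_adj k) w S"
        then have S: "S \<subseteq> L_verts k" and d: "\<forall>x\<in>L_verts k - {w}. dm k S x"
          by (auto simp: is_atdset_def dm_def)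
        then show "S \<subseteq> L_verts k" by simp
        show "2*k+3 \<le> card S" using S d by (intro lower_w[OF k _ w]) auto
      qed
    qed
    show ?thesis using nn g gw ga by simp
  qed
qed

end
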